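(* Let $\theta=\sqrt{b/a}>1$ with $a,b$ coprime positive integers, $\theta\notin\mathbb{Q}$. Let $\varepsilon>\eta>0$ and suppose the open interval $\,]2\sqrt{ab}\,\theta^{-2}\eta,\ 2\sqrt{ab}\,\theta^{-2}\varepsilon[\,$ contains $|m|$ for some integer $m$ such that the equation $ax^2-by^2=m$ has a primitive integer solution (i.e. with $\gcd(x,y)=1$). Then there exists a sequence $B_n\to\infty$ with $$\delta_{\theta,B_n,1/2}(\chi_{\varepsilon,\eta})\ge1\quad\text{for all }n\ge1.$$
   Context: On $\mathbb{P}^1(\mathbb{Q})$ use $H([u:v])=\max(|u|,|v|)$ with $u,v$ coprime integers. For real $\theta$, $r>0$, $B>0$ and compactly supported $f$ on $\mathbb{R}$, $\delta_{\theta,B,r}(f)=\sum_{[u:v]\in\mathbb{P}^1(\mathbb{Q}),v\ne0,H([u:v])\le B}f(B^{1/r}(u/v-\theta))$. For $\varepsilon>\eta\ge0$, $\chi_{\varepsilon,\eta}$ is the indicator of $\{t:\eta<|t|\le\varepsilon\}$. *)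

theory Defs
  imports "HOL-Analysis.Analysis"
begin

text \<open>Points [u:v] of P^1(Q) with v nonzero are represented uniquely by coprime
integers (u,v) with v > 0; the height is max |u| |v|.\<close>
definition delta :: "real \<Rightarrow> real \<Rightarrow> real \<Rightarrow> (real \<Rightarrow> real) \<Rightarrow> real" where
  "delta \<theta> B r f =
     (\<Sum>(u,v) \<in> {p :: int \<times> int. snd p > 0 \<and> coprime (fst p) (snd p) \<and> real_of_int (max \<bar>fst p\<bar> \<bar>snd p\<bar>) \<le> B}.
        f (B powr (1 / r) * (real_of_int u / real_of_int v - \<theta>)))"

definition chi :: "real \<Rightarrow> real \<Rightarrow> real \<Rightarrow> real" where
  "chi \<epsilon> \<eta> t = (if \<eta> < \<bar>t\<bar> \<and> \<bar>t\<bar> \<le> \<epsilon> then 1 else 0)"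

end

theory Submission
  imports Defs
begin
lemma brahma: fixes h1 h2 k1 k2 D :: int
  shows "(h1*h2 - D*k1*k2)^2 - D*(h1*k2-h2*k1)^2 = (h1^2 - D*k1^2)*(h2^2-D*k2^2)"
  by (simp add: algebra_simps power2_eq_square)

lemma approx_bound:
  fixes D h k :: int
  assumes D: "D > 0" and hk: "(h,k) \<in> approx_set (sqrt D)"
  shows "\<bar>h^2 - D*k^2\<bar> \<le> \<lceil>2 * sqrt D + 1\<rceil>"
proof -
  let ?a = "sqrt (real_of_int D)"
  have k: "k > 0" and c: "\<bar>?a - h/k\<bar> < 1/k^2" using hk by (auto simp: approx_set_def)
  have k1: "real_of_int k \<ge> 1" using k by simp
  have e1: "\<bar>h - k*?a\<bar> < 1/k"
  proof -
    have "\<bar>h - k*?a\<bar> = k * \<bar>?a - h/k\<bar>" using k by (simp add: field_simps abs_mult[symmetric] abs_minus_commute)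
    also have "\<dots> < k * (1/k^2)" using c k by (intro mult_strict_left_mono) auto
    also have "\<dots> = 1/k" by (simp add: power2_eq_square)
    finally show ?thesis .
  qed
  have e2: "\<bar>h + k*?a\<bar> \<le> 2*k*?a + 1/k"
  proof -
    have "\<bar>h + k*?a\<bar> = \<bar>(h - k*?a) + 2*k*?a\<bar>" by simp
    also have "\<dots> \<le> \<bar>h - k*?a\<bar> + 2*k*?a" 
    proof -
      have nn: "0 \<le> 2*k*?a" using k D by simp
      show ?thesis using abs_triangle_ineq[of "h - k*?a" "2*k*?a"] abs_of_nonneg[OF nn] by linarith
    qed
    finally show ?thesis using e1 by linarith
  qed
  have sq: "?a^2 = D" using D by simp
  have aa: "?a * ?a = D" using D by simp
  have pr: "(h - k*?a) * (h + k*?a) = real_of_int h * h - (real_of_int k * k) * (?a * ?a)"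
    by (simp add: algebra_simps)
  have "real_of_int \<bar>h^2 - D*k^2\<bar> = \<bar>(h - k*?a) * (h + k*?a)\<bar>"
    unfolding pr aa by (simp add: power2_eq_square algebra_simps)
  also have "\<dots> = \<bar>h - k*?a\<bar> * \<bar>h + k*?a\<bar>" by (rule abs_mult)
  finally have "real_of_int \<bar>h^2 - D*k^2\<bar> = \<bar>h - k*?a\<bar> * \<bar>h + k*?a\<bar>" .
  also have "\<dots> \<le> (1/k) * (2*k*?a + 1/k)"
    using e1 e2 k by (intro mult_mono) auto
  also have "\<dots> = 2*?a + 1/k^2" using k by (simp add: field_simps power2_eq_square)
  also have "\<dots> \<le> 2*?a + 1" using k1 by (simp add: power_le_one_iff)
  finally show ?thesis by linarith
qed

lemma pell_exists:
  fixes D :: int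
  assumes D: "D > 0" and irr: "sqrt (real_of_int D) \<notin> \<rat>"
  shows "\<exists>p q. p^2 - D*q^2 = 1 \<and> q \<noteq> 0"
proof -
  let ?a = "sqrt (real_of_int D)"
  define S where "S = approx_set ?a"
  have inf: "infinite S" using irr rational_iff_finite_approx_set unfolding S_def by blast
  define M where "M = \<lceil>2 * ?a + 1\<rceil>"
  define f where "f = (\<lambda>(h::int,k::int). (h^2 - D*k^2, h mod (h^2 - D*k^2), k mod (h^2 - D*k^2)))"
  have bnd: "\<bar>h^2 - D*k^2\<bar> \<le> M" if "(h,k) \<in> S" for h k
    using approx_bound[OF D] that unfolding S_def M_def by blast
  have modb: "\<bar>x mod N\<bar> \<le> \<bar>N\<bar>" if False: "N \<noteq> 0" for x N :: int
  proof -
    show ?thesis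
    proof (cases "N > 0")
      case True
      have "0 \<le> x mod N" "x mod N < N" using True by simp_all
      then show ?thesis by linarith
    next
      case f: False
      then have "N < 0" using False by simp
      have "x mod N \<le> 0" "N < x mod N" using \<open>N < 0\<close> by simp_all
      then show ?thesis by linarith
    qed
  qed
  have nz: "h^2 - D*k^2 \<noteq> 0" if "(h,k) \<in> S" for h k
  proof
    assume "h^2 - D*k^2 = 0"
    have k1p: "k > 0" using that by (auto simp: S_def approx_set_def)
    have "real_of_int h ^2 = D * real_of_int k ^2" using \<open>h^2 - D*k^2 = 0\<close>
      by (metis eq_iff_diff_eq_0 of_int_eq_iff of_int_mult of_int_power)
    then have "(\<bar>h\<bar> / k)^2 = real_of_int D" using k1p
      by (simp add: power_divide)
    then have "?a = \<bar>h\<bar> / k" using k1p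
      by (intro real_sqrt_unique) auto
    then have "?a \<in> \<rat>" by simp
    then show False using irr by blast
  qed
  have "f ` S \<subseteq> {-M..M} \<times> {-M..M} \<times> {-M..M}"
  proof
    fix z assume "z \<in> f ` S"
    then obtain h k where hk: "(h,k) \<in> S" and z: "z = f (h,k)" by auto
    have b: "\<bar>h^2 - D*k^2\<bar> \<le> M" using bnd hk by blast
    have "\<bar>h mod (h^2 - D*k^2)\<bar> \<le> M" "\<bar>k mod (h^2 - D*k^2)\<bar> \<le> M"
      using modb[of "h^2 - D*k^2" h] modb[of "h^2 - D*k^2" k] b nz[OF hk] by linarith+
    then show "z \<in> {-M..M} \<times> {-M..M} \<times> {-M..M}" using b z unfolding f_def by auto
  qed
  then have "finite (f ` S)" by (rule finite_subset) auto
  from pigeonhole_infinite[OF inf this] obtain z0 where z0: "z0 \<in> S"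
    and fin: "infinite {z\<in>S. f z = f z0}" by blast
  have "infinite ({z\<in>S. f z = f z0} - {z0})" using fin by simp
  then obtain w where "w \<in> {z\<in>S. f z = f z0} - {z0}" by (metis finite.emptyI ex_in_conv)
  then have w: "w \<in> {z\<in>S. f z = f z0}" "w \<noteq> z0" by auto
  obtain h1 k1 where z0e: "z0 = (h1,k1)" by (cases z0)
  obtain h2 k2 where we: "w = (h2,k2)" by (cases w)
  define N where "N = h1^2 - D*k1^2"
  have feq: "f (h2,k2) = f (h1,k1)" using w z0e we by auto
  have N2: "h2^2 - D*k2^2 = N" using feq unfolding f_def N_def by auto
  have hm: "N dvd h2 - h1" and km: "N dvd k2 - k1"
    using feq unfolding f_def N_def by (auto simp: mod_eq_dvd_iff)
  have S1: "(h1,k1) \<in> approx_set ?a" and S2: "(h2,k2) \<in> approx_set ?a"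
    using z0 z0e w we S_def by auto
  have k1p: "k1 > 0" "coprime h1 k1" and k2p: "k2 > 0" "coprime h2 k2"
    using S1 S2 by (auto simp: approx_set_def)
  have N0: "N \<noteq> 0" using nz[of h1 k1] z0 z0e N_def by simp
  define P where "P = h1*h2 - D*k1*k2"
  define Q where "Q = h1*k2 - h2*k1"
  have "P = h1*(h2-h1) - D*k1*(k2-k1) + N" unfolding P_def N_def by (simp add: algebra_simps power2_eq_square)
  then have dP: "N dvd P" using hm km by simp
  have "Q = h1*(k2-k1) - k1*(h2-h1)" unfolding Q_def by (simp add: algebra_simps)
  then have dQ: "N dvd Q" using hm km by simp
  have PQ: "P^2 - D*Q^2 = N^2" unfolding P_def Q_def using brahma[of h1 h2 D k1 k2] N2 N_def
    by (simp add: power2_eq_square)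
  have Q0: "Q \<noteq> 0"
  proof
    assume "Q = 0"
    then have e: "h1*k2 = h2*k1" unfolding Q_def by simp
    have "k1 dvd h1*k2" using e by simp
    then have "k1 dvd k2" using k1p coprime_dvd_mult_right_iff coprime_commute by blast
    moreover have "k2 dvd h2*k1" using e by (metis dvd_triv_right)
    then have "k2 dvd k1" using k2p coprime_dvd_mult_right_iff coprime_commute by blast
    ultimately have "k1 = k2" using k1p k2p by (simp add: zdvd_antisym_nonneg)
    then have "h1 = h2" using e k1p by simp
    then show False using w z0e we \<open>k1 = k2\<close> by simp
  qed
  obtain p where p: "P = N*p" using dP by blast
  obtain q where q: "Q = N*q" using dQ by blast
  have "N^2 * (p^2 - D*q^2) = N^2 * 1" using PQ p q by (simp add: algebra_simps power2_eq_square)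
  then have "p^2 - D*q^2 = 1" using N0 by simp
  moreover have "q \<noteq> 0" using Q0 q by auto
  ultimately show ?thesis by blast
qed
lemma T_eq: fixes a b p q u v :: int
  shows "a*(p*u + b*q* v)^2 - b*(a*q*u + p* v)^2 = (p^2 - a*b*q^2)*(a*u^2 - b* v^2)"
  by (simp add: algebra_simps power2_eq_square)

lemma T_inv1: fixes a b p q u v :: int
  shows "p*(p*u + b*q* v) - b*q*(a*q*u + p* v) = (p^2 - a*b*q^2)*u"
  by (simp add: algebra_simps power2_eq_square)

lemma T_inv2: fixes a b p q u v :: int
  shows "p*(a*q*u + p* v) - a*q*(p*u + b*q* v) = (p^2 - a*b*q^2)* v"
  by (simp add: algebra_simps power2_eq_square)

lemma cancel_aux: "(a::real) \<noteq> 0 \<Longrightarrow> S \<noteq> 0 \<Longrightarrow> (a*D*S)/(a*y*S) = D/y"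
  by simp

lemma cancel2: "(y::real) \<noteq> 0 \<Longrightarrow> (y*M)^2 * (c/(a*y^2*T)) = M^2*c/(a*T)"
proof (cases "a*T = 0")
  case True then show ?thesis by auto
next
  case False
  assume "y \<noteq> 0"
  with False show ?thesis by (simp add: field_simps power2_eq_square)
qed

theorem mainTheorem8:
  fixes a b :: int and \<theta> \<epsilon> \<eta> :: real
  assumes "a > 0" "b > 0" "coprime a b"
    and "\<theta> = sqrt (real_of_int b / real_of_int a)" "\<theta> > 1" "\<theta> \<notin> \<rat>"
    and "\<epsilon> > \<eta>" "\<eta> > 0"
    and "\<exists>m :: int. 2 * sqrt (real_of_int (a * b)) * \<theta> powr (-2) * \<eta> < \<bar>real_of_int m\<bar>
           \<and> \<bar>real_of_int m\<bar> < 2 * sqrt (real_of_int (a * b)) * \<theta> powr (-2) * \<epsilon>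
           \<and> (\<exists>x y :: int. coprime x y \<and> a * x^2 - b * y^2 = m)"
  shows "\<exists>B :: nat \<Rightarrow> real. (\<forall>n. B n > 0) \<and> filterlim B at_top sequentially
           \<and> (\<forall>n \<ge> 1. delta \<theta> (B n) (1/2) (chi \<epsilon> \<eta>) \<ge> 1)"
proof -
  from assms(9) obtain m x y :: int where
    mlo: "2 * sqrt (real_of_int (a * b)) * \<theta> powr (-2) * \<eta> < \<bar>real_of_int m\<bar>"
    and mhi: "\<bar>real_of_int m\<bar> < 2 * sqrt (real_of_int (a * b)) * \<theta> powr (-2) * \<epsilon>"
    and cxy: "coprime x y" and exy: "a*x^2 - b*y^2 = m" by blast
  have ra: "real_of_int a > 0" using assms(1) by simp
  have rb: "real_of_int b > 0" using assms(2) by simp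
  have th0: "\<theta> > 0" using assms(5) by simp
  have thsq: "\<theta>^2 = b / a" using assms(4) ra rb by simp
  have sab: "sqrt (real_of_int (a*b)) = a * \<theta>"
  proof -
    have "(a*\<theta>)^2 = real_of_int (a*b)" using thsq ra by (simp add: power_mult_distrib field_simps power2_eq_square)
    then show ?thesis using ra th0 by (intro real_sqrt_unique) auto
  qed
  have irrD: "sqrt (real_of_int (a*b)) \<notin> \<rat>"
  proof
    assume "sqrt (real_of_int (a*b)) \<in> \<rat>"
    then have "a*\<theta> \<in> \<rat>" using sab by simp
    then have "(a*\<theta>)/a \<in> \<rat>" by (intro Rats_divide) auto
    then show False using ra assms(6) by simp
  qed
  have pw: "\<theta> powr (-2) = 1/\<theta>^2" using th0 by (simp add: powr_minus divide_inverse)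
  have K: "2 * sqrt (real_of_int (a * b)) * \<theta> powr (-2) = 2*a/\<theta>"
    unfolding sab pw using th0 by (simp add: field_simps power2_eq_square)
  have "2*a*\<eta>/\<theta> > 0" using assms(8) ra th0 by simp
  then have m0: "m \<noteq> 0" using mlo unfolding K by auto
  have cle: "\<theta> * \<bar>m\<bar> / (2*a) < \<epsilon>" using mhi unfolding K using th0 ra by (simp add: field_simps)
  obtain p0 q0 where pq0: "p0^2 - (a*b)*q0^2 = 1" "q0 \<noteq> 0" using pell_exists[of "a*b"] irrD assms(1,2) by auto
  define p where "p = \<bar>p0\<bar>"
  define q where "q = \<bar>q0\<bar>"
  have pq: "p^2 - a*b*q^2 = 1" using pq0 unfolding p_def q_def by simp
  have q1: "q \<ge> 1" using pq0 unfolding q_def by simp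
  have p1: "p \<ge> 1"
  proof -
    have "p \<ge> 0" unfolding p_def by simp
    moreover have "a*b*q0^2 \<ge> 0" using assms(1,2) by simp
    then have "p \<noteq> 0" using pq0 unfolding p_def by auto
    ultimately show ?thesis by simp
  qed
  have aq1: "a*q \<ge> 1" using mult_mono[of 1 a 1 q] q1 assms(1) by simp
  have bq1: "b*q \<ge> 1" using mult_mono[of 1 b 1 q] q1 assms(2) by simp
  define T where "T = (\<lambda>(u::int, v::int). (p*u + b*q* v, a*q*u + p* v))"
  define inv where "inv = (\<lambda>(u::int,v::int). u \<ge> 0 \<and> v \<ge> 0 \<and> coprime u v \<and> a*u^2 - b* v^2 = m)"
  have Tinv: "inv (T z)" if iz: "inv z" for z
  proof -
    obtain u v where z: "z = (u,v)" by (cases z)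
    have u0: "u \<ge> 0" and v0: "v \<ge> 0" and cuv: "coprime u v" and euv: "a*u^2 - b* v^2 = m"
      using iz z unfolding inv_def by auto
    have "p*u + b*q* v \<ge> 0" using u0 v0 p1 bq1 by simp
    moreover have "a*q*u + p* v \<ge> 0" using u0 v0 p1 aq1 by simp
    moreover have "a*(p*u + b*q* v)^2 - b*(a*q*u + p* v)^2 = m"
      using T_eq[of a p u b q v] pq euv by simp
    moreover have "coprime (p*u + b*q* v) (a*q*u + p* v)"
    proof (rule coprimeI)
      fix c assume c1: "c dvd p*u + b*q* v" and c2: "c dvd a*q*u + p* v"
      have "c dvd p*(p*u + b*q* v) - b*q*(a*q*u + p* v)" using c1 c2 by simp
      then have cu: "c dvd u" using T_inv1[of p u b q v a] pq by simp
      have "c dvd p*(a*q*u + p* v) - a*q*(p*u + b*q* v)" using c1 c2 by simp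
      then have cv: "c dvd v" using T_inv2[of p a q u v b] pq by simp
      show "is_unit c" using coprime_common_divisor[OF cuv cu cv] .
    qed
    ultimately show ?thesis unfolding inv_def T_def z by simp
  qed
  define S where "S = (\<lambda>n. (T^^n) (\<bar>x\<bar>, \<bar>y\<bar>))"
  have Sinv: "inv (S n)" for n
  proof (induction n)
    case 0
    show ?case unfolding S_def inv_def using cxy exy by simp
  next
    case (Suc n)
    then show ?case using Tinv unfolding S_def by simp
  qed
  define X where "X = (\<lambda>n. fst (S n))"
  define Y where "Y = (\<lambda>n. snd (S n))"
  have XY: "X n \<ge> 0" "Y n \<ge> 0" "coprime (X n) (Y n)" "a*(X n)^2 - b*(Y n)^2 = m" for n
    using Sinv[of n] unfolding inv_def X_def Y_def by (auto split: prod.splits)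
  have Sstep: "S (Suc n) = T (S n)" for n unfolding S_def by simp
  have Xs: "X (Suc n) = p*X n + b*q*Y n" and Ys: "Y (Suc n) = a*q*X n + p*Y n" for n
    unfolding X_def Y_def Sstep T_def by (auto split: prod.splits)
  have XY1: "X n + Y n \<ge> 1" for n
  proof (rule ccontr)
    assume "\<not> X n + Y n \<ge> 1"
    then have "X n = 0" "Y n = 0" using XY(1,2)[of n] by auto
    then show False using XY(3)[of n] by simp
  qed
  have Ygrow: "Y (Suc n) \<ge> X n + Y n" for n
  proof -
    have "a*q*X n \<ge> X n" using mult_right_mono[OF aq1 XY(1)[of n]] by simp
    moreover have "p*Y n \<ge> Y n" using mult_right_mono[OF p1 XY(2)[of n]] by simp
    ultimately show ?thesis unfolding Ys by simp
  qed
  have Xgrow: "X (Suc n) \<ge> X n + Y n" for n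
  proof -
    have "b*q*Y n \<ge> Y n" using mult_right_mono[OF bq1 XY(2)[of n]] by simp
    moreover have "p*X n \<ge> X n" using mult_right_mono[OF p1 XY(1)[of n]] by simp
    ultimately show ?thesis unfolding Xs by simp
  qed
  have sumg: "X n + Y n \<ge> int n + 1" for n
  proof (induction n)
    case 0 then show ?case using XY1[of 0] by simp
  next
    case (Suc n)
    then show ?case using Xgrow[of n] Ygrow[of n] XY1[of n] by simp
  qed
  have Ybig: "Y (Suc n) \<ge> int n + 1" for n using Ygrow[of n] sumg[of n] by simp
  define xr where "xr = (\<lambda>k. real_of_int (X (Suc k)))"
  define yr where "yr = (\<lambda>k. real_of_int (Y (Suc k)))"
  have yrb: "yr k \<ge> real k + 1" for k using Ybig[of k] unfolding yr_def by linarith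
  have yrp: "yr k > 0" for k using yrb[of k] by linarith
  have xrn: "xr k \<ge> 0" for k using XY(1)[of "Suc k"] unfolding xr_def by simp
  have eqr: "a*(xr k)^2 - b*(yr k)^2 = m" for k
    using arg_cong[OF XY(4)[of "Suc k"], of real_of_int] unfolding xr_def yr_def by simp
  define t where "t = (\<lambda>k. xr k / yr k)"
  have tn: "t k \<ge> 0" for k using xrn[of k] yrp[of k] unfolding t_def by simp
  have tsq: "(t k)^2 = \<theta>^2 + (m/a) * (inverse (yr k))^2" for k
  proof -
    have x2: "(xr k)^2 = (m + b*(yr k)^2)/a" using eqr[of k] ra by (simp add: field_simps)
    show ?thesis unfolding t_def thsq power_divide x2 using ra yrp[of k]
      by (simp add: field_simps power2_eq_square)
  qed
  have yinf: "filterlim yr at_top sequentially"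
  proof (rule filterlim_at_top_mono[OF filterlim_real_sequentially], rule always_eventually, rule allI)
    fix k show "real k \<le> yr k" using yrb[of k] by simp
  qed
  have "(\<lambda>k. \<theta>^2 + (m/a) * (inverse (yr k))^2) \<longlonglongrightarrow> \<theta>^2 + (m/a) * 0^2"
    by (intro tendsto_intros tendsto_inverse_0_at_top[OF yinf])
  then have "(\<lambda>k. sqrt ((t k)^2)) \<longlonglongrightarrow> sqrt (\<theta>^2)" unfolding tsq by (intro tendsto_intros) simp
  then have tlim: "t \<longlonglongrightarrow> \<theta>" using tn th0 by simp
  define g where "g = (\<lambda>k. (max (t k) 1)^2 * \<bar>m\<bar> / (a * (t k + \<theta>)))"
  have "g \<longlonglongrightarrow> (max \<theta> 1)^2 * \<bar>m\<bar> / (a * (\<theta> + \<theta>))"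
    unfolding g_def using ra th0 by (intro tendsto_intros tlim) auto
  moreover have "(max \<theta> 1)^2 * \<bar>m\<bar> / (a * (\<theta> + \<theta>)) = \<theta> * \<bar>m\<bar> / (2*a)"
    using assms(5) th0 by (simp add: max_def field_simps power2_eq_square)
  ultimately have glim: "g \<longlonglongrightarrow> \<theta> * \<bar>m\<bar> / (2*a)" by simp
  from order_tendstoD(2)[OF glim cle] obtain N0 where N0: "\<And>k. k \<ge> N0 \<Longrightarrow> g k < \<epsilon>"
    by (auto simp: eventually_sequentially)
  define d where "d = (\<lambda>k. \<bar>xr k / yr k - \<theta>\<bar>)"
  define H where "H = (\<lambda>k. max (xr k) (yr k))"
  have dform: "d k = \<bar>m\<bar> / (a * (yr k)^2 * (t k + \<theta>))" for k
  proof -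
    have "a*(xr k - \<theta>*yr k)*(xr k + \<theta>*yr k) = a*(xr k)^2 - a*\<theta>^2*(yr k)^2"
      by (simp add: algebra_simps power2_eq_square)
    also have "\<dots> = m" using eqr[of k] ra unfolding thsq by simp
    finally have e: "a*(xr k - \<theta>*yr k)*(xr k + \<theta>*yr k) = m" .
    have pos: "xr k + \<theta>*yr k > 0" using xrn[of k] yrp[of k] th0 by (simp add: add_nonneg_pos)
    have den: "a * (yr k)^2 * (t k + \<theta>) = a * yr k * (xr k + \<theta>*yr k)"
      unfolding t_def using yrp[of k] by (simp add: field_simps power2_eq_square)
    have "xr k / yr k - \<theta> = (xr k - \<theta>*yr k) / yr k" using yrp[of k] by (simp add: field_simps)
    also have "\<dots> = (a*(xr k - \<theta>*yr k)*(xr k + \<theta>*yr k)) / (a * yr k * (xr k + \<theta>*yr k))"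
      using cancel_aux[of a "xr k + \<theta>*yr k" "xr k - \<theta>*yr k" "yr k"] ra pos by simp
    also have "\<dots> = m / (a * (yr k)^2 * (t k + \<theta>))" unfolding den e ..
    finally have "xr k / yr k - \<theta> = m / (a * (yr k)^2 * (t k + \<theta>))" .
    then show ?thesis unfolding d_def using ra yrp[of k] tn[of k] th0 by (simp add: abs_divide abs_mult)
  qed
  have dpos: "d k > 0" for k unfolding dform using m0 ra yrp[of k] tn[of k] th0 by simp
  have Hform: "H k = yr k * max (t k) 1" for k
    unfolding H_def t_def using yrp[of k] by (simp add: max_def field_simps)
  have Hg: "(H k)^2 * d k = g k" for k
    unfolding Hform dform g_def using cancel2[of "yr k" "max (t k) 1" "\<bar>real_of_int m\<bar>" a "t k + \<theta>"] yrp[of k] by simp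
  have Hy: "H k \<ge> yr k" for k unfolding H_def by simp
  define B where "B = (\<lambda>n. sqrt (\<epsilon> / d (n + N0)))"
  have Bpos: "B n > 0" for n unfolding B_def using dpos assms(7,8) by simp
  have B2: "(B n)^2 = \<epsilon> / d (n + N0)" for n unfolding B_def using dpos[of "n+N0"] assms(7,8) by simp
  have HB: "H (n + N0) \<le> B n" for n
  proof -
    have "(H (n+N0))^2 * d (n+N0) < \<epsilon>" using Hg N0[of "n+N0"] by simp
    then have "(H (n+N0))^2 \<le> \<epsilon> / d (n + N0)" using dpos[of "n+N0"] by (simp add: field_simps)
    then have "sqrt ((H (n+N0))^2) \<le> B n" unfolding B_def by (rule real_sqrt_le_mono)
    moreover have "H (n+N0) \<ge> 0" using Hy[of "n+N0"] yrp[of "n+N0"] by linarith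
    ultimately show ?thesis by simp
  qed
  have Binf: "filterlim B at_top sequentially"
  proof (rule filterlim_at_top_mono[OF filterlim_real_sequentially], rule always_eventually, rule allI)
    fix n show "real n \<le> B n" using HB[of n] Hy[of "n+N0"] yrb[of "n+N0"] by simp
  qed
  have Bdelta: "delta \<theta> (B n) (1/2) (chi \<epsilon> \<eta>) \<ge> 1" for n
  proof -
    define k where "k = n + N0"
    define A where "A = {p :: int \<times> int. snd p > 0 \<and> coprime (fst p) (snd p) \<and> real_of_int (max \<bar>fst p\<bar> \<bar>snd p\<bar>) \<le> B n}"
    define F where "F = (\<lambda>(u,v). chi \<epsilon> \<eta> (B n powr (1 / (1/2)) * (real_of_int u / real_of_int v - \<theta>)))"
    have dl: "delta \<theta> (B n) (1/2) (chi \<epsilon> \<eta>) = sum F A" unfolding delta_def A_def F_def by simp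
    have finA: "finite A"
    proof (rule finite_subset)
      show "A \<subseteq> {-\<lceil>B n\<rceil>..\<lceil>B n\<rceil>} \<times> {-\<lceil>B n\<rceil>..\<lceil>B n\<rceil>}"
      proof
        fix z assume "z \<in> A"
        then have z: "real_of_int (max \<bar>fst z\<bar> \<bar>snd z\<bar>) \<le> B n" unfolding A_def by blast
        have "real_of_int (max \<bar>fst z\<bar> \<bar>snd z\<bar>) \<le> real_of_int \<lceil>B n\<rceil>"
          using z le_of_int_ceiling[of "B n"] by linarith
        then have "max \<bar>fst z\<bar> \<bar>snd z\<bar> \<le> \<lceil>B n\<rceil>" by linarith
        then show "z \<in> {-\<lceil>B n\<rceil>..\<lceil>B n\<rceil>} \<times> {-\<lceil>B n\<rceil>..\<lceil>B n\<rceil>}"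
          by (cases z) auto
      qed
    qed simp
    have mem: "(X (Suc k), Y (Suc k)) \<in> A"
    proof -
      have "Y (Suc k) > 0" using Ybig[of k] by simp
      moreover have "real_of_int (max \<bar>X (Suc k)\<bar> \<bar>Y (Suc k)\<bar>) = H k"
        using XY(1,2)[of "Suc k"] unfolding H_def xr_def yr_def by simp
      ultimately show ?thesis unfolding A_def using XY(3)[of "Suc k"] HB[of n] k_def by simp
    qed
    have F1: "F (X (Suc k), Y (Suc k)) = 1"
    proof -
      have pw2: "B n powr (1 / (1/2)) = (B n)^2" using Bpos[of n] by simp
      have "\<bar>(B n)^2 * (xr k / yr k - \<theta>)\<bar> = \<epsilon> / d k * d k"
        unfolding B2 k_def d_def using dpos assms(7,8) by (simp add: abs_mult)
      also have "\<dots> = \<epsilon>" using dpos[of k] by simp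
      finally have "\<bar>(B n)^2 * (xr k / yr k - \<theta>)\<bar> = \<epsilon>" .
      then show ?thesis unfolding F_def chi_def pw2 xr_def yr_def using assms(7) by simp
    qed
    have "F (X (Suc k), Y (Suc k)) \<le> sum F A"
      by (rule member_le_sum[OF mem _ finA]) (auto simp: F_def chi_def split: if_splits)
    then show ?thesis using dl F1 by simp
  qed
  show ?thesis using Bpos Binf Bdelta by blast
qed
end
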